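(* Let $N\ge3$ and let $([v_{ij}:v_{ji}])_{1\le i<j\le N}$ be common lines data such that every triple $(i,j,k)$ of distinct indices strictly satisfies the spherical triangle inequalities, and such that $L_{ijk,ijm}=0$ for all pairwise distinct indices $i,j,k,m$. Then there exist generic frames $F_1,\dots,F_N$ realizing the data, i.e. with $\iota_i(v_{ij})=\iota_j(v_{ji})$ for all $i\neq j$, and they are unique up to the diagonal action of $\mathrm O(3)$.
   Context: A frame is an ordered pair $(a,b)$ of orthonormal vectors in $\mathbb R^3$. Planes $P_1=\dots=P_N=\mathbb R^2$; a frame $F_i=(a_i,b_i)$ gives the embedding $\iota_i:P_i\to\mathbb R^3$, $\iota_i(x,y)=xa_i+yb_i$. Frames $F_1,\dots,F_N$ are generic if the planes $\iota_i(P_i)$ are pairwise distinct and the lines $\iota_i(P_i)\cap\iota_j(P_j)$, $i<j$, are pairwise distinct. $\mathrm O(3)$ is the group of all $3\times3$ orthogonal matrices, acting by $A\cdot(F_1,\dots,F_N)=(AF_1,\dots,AF_N)$, $A(a,b)=(Aa,Ab)$. Common lines data is a collection $([v_{ij}:v_{ji}])_{1\le i<j\le N}$ of elements of $\mathbb P(P_i\times P_j)$ (nonzero pairs $(v_{ij},v_{ji})\in\mathbb R^2\times\mathbb R^2$ up to nonzero scaling) with $\|v_{ij}\|^2=\|v_{ji}\|^2$; indices of a pair may be written in either order. For a triple and representatives, $\alpha_{ijk}=\cos^{-1}\frac{v_{ij}\cdot v_{ik}}{\|v_{ij}\|\|v_{ik}\|}$, $\beta_{ijk}=\cos^{-1}\frac{v_{ji}\cdot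 v_{jk}}{\|v_{ji}\|\|v_{jk}\|}$, $\gamma_{ijk}=\cos^{-1}\frac{v_{ki}\cdot v_{kj}}{\|v_{ki}\|\|v_{kj}\|}$; the triple strictly satisfies the spherical triangle inequalities if for any representatives $\beta+\gamma>\alpha$, $\alpha+\gamma>\beta$, $\alpha+\beta>\gamma$, $\alpha+\beta+\gamma<2\pi$. For pairwise distinct $i,j,k,m$ and unit-norm representatives, $L_{ijk,ijm}=\big(v_{ki}\cdot v_{kj}-(v_{ij}\cdot v_{ik})(v_{ji}\cdot v_{jk})\big)|\det[v_{ij},v_{im}]\det[v_{ji},v_{jm}]|-\sigma\big(v_{mi}\cdot v_{mj}-(v_{ij}\cdot v_{im})(v_{ji}\cdot v_{jm})\big)|\det[v_{ij},v_{ik}]\det[v_{ji},v_{jk}]|$ with $\sigma=\operatorname{sign}(\det[v_{ij},v_{ik}]\det[v_{ij},v_{im}]\det[v_{ji},v_{jk}]\det[v_{ji},v_{jm}])$, where $\det[u,w]$ is the $2\times2$ determinant with columns $u,w$. *)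

theory Defs
  imports "HOL-Analysis.Analysis"
begin

text \<open>Common lines data is given by a fixed representative
  v i j (= v_ij) for every ordered pair of distinct indices.\<close>

definition det2 :: "real^2 \<Rightarrow> real^2 \<Rightarrow> real" where
  "det2 u w = u$1 * w$2 - u$2 * w$1"

definition ang :: "real^2 \<Rightarrow> real^2 \<Rightarrow> real" where
  "ang u w = arccos ((u \<bullet> w) / (norm u * norm w))"

definition sph_tri_strict :: "real \<Rightarrow> real \<Rightarrow> real \<Rightarrow> bool" where
  "sph_tri_strict \<alpha> \<beta> \<gamma> \<longleftrightarrow>
     \<beta> + \<gamma> > \<alpha> \<and> \<alpha> + \<gamma> > \<beta> \<and> \<alpha> + \<beta> > \<gamma> \<and> \<alpha> + \<beta> + \<gamma> < 2 * pi"

definition common_lines_data :: "nat \<Rightarrow> (nat \<Rightarrow> nat \<Rightarrow> real^2) \<Rightarrow> bool" where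
  "common_lines_data N v \<longleftrightarrow>
     (\<forall>i\<in>{1..N}. \<forall>j\<in>{1..N}. i \<noteq> j \<longrightarrow>
        (v i j, v j i) \<noteq> (0, 0) \<and> norm (v i j) ^ 2 = norm (v j i) ^ 2)"

text \<open>Strict spherical triangle inequalities for the triple (i,j,k), for ANY representatives:
  the pair [v_ij:v_ji] is rescaled by c_ij, [v_ik:v_ki] by c_ik, [v_jk:v_kj] by c_jk.\<close>
definition triple_strict :: "(nat \<Rightarrow> nat \<Rightarrow> real^2) \<Rightarrow> nat \<Rightarrow> nat \<Rightarrow> nat \<Rightarrow> bool" where
  "triple_strict v i j k \<longleftrightarrow>
     (\<forall>cij cik cjk :: real. cij \<noteq> 0 \<longrightarrow> cik \<noteq> 0 \<longrightarrow> cjk \<noteq> 0 \<longrightarrow>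
        sph_tri_strict
          (ang (cij *\<^sub>R v i j) (cik *\<^sub>R v i k))
          (ang (cij *\<^sub>R v j i) (cjk *\<^sub>R v j k))
          (ang (cik *\<^sub>R v k i) (cjk *\<^sub>R v k j)))"

definition unitv :: "(nat \<Rightarrow> nat \<Rightarrow> real^2) \<Rightarrow> nat \<Rightarrow> nat \<Rightarrow> real^2" where
  "unitv v i j = (1 / norm (v i j)) *\<^sub>R v i j"

definition Lval :: "(nat \<Rightarrow> nat \<Rightarrow> real^2) \<Rightarrow> nat \<Rightarrow> nat \<Rightarrow> nat \<Rightarrow> nat \<Rightarrow> real" where
  "Lval v i j k m =
     (let u = unitv v;
          \<sigma> = sgn (det2 (u i j) (u i k) * det2 (u i j) (u i m)
                    * det2 (u j i) (u j k) * det2 (u j i) (u j m))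
      in (u k i \<bullet> u k j - (u i j \<bullet> u i k) * (u j i \<bullet> u j k))
           * \<bar>det2 (u i j) (u i m) * det2 (u j i) (u j m)\<bar>
         - \<sigma> * (u m i \<bullet> u m j - (u i j \<bullet> u i m) * (u j i \<bullet> u j m))
           * \<bar>det2 (u i j) (u i k) * det2 (u j i) (u j k)\<bar>)"

definition is_frame :: "real^3 \<Rightarrow> real^3 \<Rightarrow> bool" where
  "is_frame a b \<longleftrightarrow> norm a = 1 \<and> norm b = 1 \<and> a \<bullet> b = 0"

definition embed :: "real^3 \<Rightarrow> real^3 \<Rightarrow> real^2 \<Rightarrow> real^3" where
  "embed a b p = p$1 *\<^sub>R a + p$2 *\<^sub>R b"

definition frames :: "nat \<Rightarrow> (nat \<Rightarrow> real^3) \<Rightarrow> (nat \<Rightarrow> real^3) \<Rightarrow> bool" where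
  "frames N a b \<longleftrightarrow> (\<forall>i\<in>{1..N}. is_frame (a i) (b i))"

definition plane :: "real^3 \<Rightarrow> real^3 \<Rightarrow> (real^3) set" where
  "plane a b = span {a, b}"

definition generic :: "nat \<Rightarrow> (nat \<Rightarrow> real^3) \<Rightarrow> (nat \<Rightarrow> real^3) \<Rightarrow> bool" where
  "generic N a b \<longleftrightarrow>
     (\<forall>i\<in>{1..N}. \<forall>j\<in>{1..N}. i \<noteq> j \<longrightarrow> plane (a i) (b i) \<noteq> plane (a j) (b j)) \<and>
     (\<forall>i\<in>{1..N}. \<forall>j\<in>{1..N}. \<forall>k\<in>{1..N}. \<forall>l\<in>{1..N}.
        i < j \<longrightarrow> k < l \<longrightarrow> (i, j) \<noteq> (k, l) \<longrightarrow>
        plane (a i) (b i) \<inter> plane (a j) (b j) \<noteq> plane (a k) (b k) \<inter> plane (a l) (b l))"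

definition realizes :: "nat \<Rightarrow> (nat \<Rightarrow> nat \<Rightarrow> real^2) \<Rightarrow> (nat \<Rightarrow> real^3) \<Rightarrow> (nat \<Rightarrow> real^3) \<Rightarrow> bool" where
  "realizes N v a b \<longleftrightarrow>
     (\<forall>i\<in>{1..N}. \<forall>j\<in>{1..N}. i \<noteq> j \<longrightarrow>
        embed (a i) (b i) (v i j) = embed (a j) (b j) (v j i))"

end

theory Submission
  imports Defs
begin

unbundle cross3_syntax



lemma inner2: "(p::real^2) \<bullet> q = p$1*q$1 + p$2*q$2"
  by (simp add: inner_vec_def sum_2)

lemma inner3: "(p::real^3) \<bullet> q = p$1*q$1 + p$2*q$2 + p$3*q$3"
  by (simp add: inner_vec_def sum_3)

lemma frame_basic:
  assumes "is_frame a b"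
  shows "a \<bullet> a = 1" "b \<bullet> b = 1" "a \<bullet> b = 0" "b \<bullet> a = 0"
    "(a \<times> b) \<bullet> a = 0" "(a \<times> b) \<bullet> b = 0" "a \<bullet> (a \<times> b) = 0" "b \<bullet> (a \<times> b) = 0"
    "(a \<times> b) \<times> a = b" "(a \<times> b) \<times> b = - a" "(a \<times> b) \<bullet> (a \<times> b) = 1"
proof -
  have aa: "a \<bullet> a = 1" "b \<bullet> b = 1" "a \<bullet> b = 0" using assms unfolding is_frame_def by (auto simp: norm_eq_1)
  then show "a \<bullet> a = 1" "b \<bullet> b = 1" "a \<bullet> b = 0" "b \<bullet> a = 0" by (auto simp: inner_commute)
  show "(a \<times> b) \<bullet> a = 0" "(a \<times> b) \<bullet> b = 0" "a \<bullet> (a \<times> b) = 0" "b \<bullet> (a \<times> b) = 0"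
    by (simp_all add: dot_cross_self inner_commute)
  show "(a \<times> b) \<times> a = b" using Lagrange[of a a b] aa cross_skew[of "a \<times> b" a]
    by (simp add: inner_commute)
  show "(a \<times> b) \<times> b = - a" using Lagrange[of b a b] aa cross_skew[of "a \<times> b" b]
    by (simp add: inner_commute)
  show "(a \<times> b) \<bullet> (a \<times> b) = 1" using dot_cross[of a b a b] aa by (simp add: inner_commute)
qed

lemma triple_decomp:
  fixes a b c x :: "real^3"
  shows "(a \<bullet> (b \<times> c)) *\<^sub>R x = (x \<bullet> a) *\<^sub>R (b \<times> c) + (x \<bullet> b) *\<^sub>R (c \<times> a) + (x \<bullet> c) *\<^sub>R (a \<times> b)"
  by (simp add: cross3_simps) (simp add: forall_3 ring_distribs)

lemma frame_decomp3:
  assumes "is_frame a b"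
  shows "x = (x \<bullet> a) *\<^sub>R a + (x \<bullet> b) *\<^sub>R b + (x \<bullet> (a \<times> b)) *\<^sub>R (a \<times> b)"
proof -
  have 1: "b \<times> (a \<times> b) = a" using frame_basic(10)[OF assms] cross_skew[of b "a \<times> b"] by simp
  have 2: "(a \<times> b) \<times> a = b" using frame_basic(9)[OF assms] .
  have 3: "a \<bullet> (b \<times> (a \<times> b)) = 1" using 1 frame_basic(1)[OF assms] by simp
  show ?thesis using triple_decomp[of a b "a \<times> b" x] 1 2 3 by simp
qed

lemma embed_inner:
  assumes "is_frame a b"
  shows "embed a b p \<bullet> embed a b q = p \<bullet> q"
  using frame_basic[OF assms] by (simp add: embed_def inner2 inner_add_left inner_add_right algebra_simps)

lemma embed_normal:
  assumes "is_frame a b"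
  shows "embed a b p \<bullet> (a \<times> b) = 0" "(a \<times> b) \<bullet> embed a b p = 0"
  using frame_basic[OF assms] by (simp_all add: embed_def inner_add_left inner_add_right)

lemma embed_scale: "embed a b (c *\<^sub>R p) = c *\<^sub>R embed a b p"
  by (simp add: embed_def algebra_simps)

lemma embed_rot:
  assumes "is_frame a b" "u \<bullet> u = 1"
  shows "embed a b p = (p \<bullet> u) *\<^sub>R embed a b u + det2 u p *\<^sub>R ((a \<times> b) \<times> embed a b u)"
proof -
  have uu: "u$1*u$1 + u$2*u$2 = 1" using assms(2) by (simp add: inner2)
  have "(p \<bullet> u) *\<^sub>R embed a b u + det2 u p *\<^sub>R ((a \<times> b) \<times> embed a b u)
      = (p$1 * (u$1*u$1 + u$2*u$2)) *\<^sub>R a + (p$2 * (u$1*u$1 + u$2*u$2)) *\<^sub>R b"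
    using frame_basic[OF assms(1)]
    by (simp add: embed_def inner2 det2_def cross_add_right cross_mult_right algebra_simps)
  then show ?thesis using uu by (simp add: embed_def)
qed

lemma gram:
  assumes f: "is_frame a b" and f': "is_frame a' b'" and u: "u \<bullet> u = 1" and u': "u' \<bullet> u' = 1"
    and eq: "embed a b u = embed a' b' u'"
  shows "embed a b p \<bullet> embed a' b' q = (p \<bullet> u) * (q \<bullet> u') + det2 u p * det2 u' q * ((a \<times> b) \<bullet> (a' \<times> b'))"
proof -
  define w where "w = embed a b u"
  have w': "w = embed a' b' u'" using eq w_def by simp
  have ww: "w \<bullet> w = 1" using embed_inner[OF f, of u u] u w_def by simp
  have wn: "(a \<times> b) \<bullet> w = 0" using embed_normal[OF f] w_def by simp
  have wn': "w \<bullet> (a' \<times> b') = 0" using embed_normal[OF f'] w' by simp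
  have e1: "embed a b p = (p \<bullet> u) *\<^sub>R w + det2 u p *\<^sub>R ((a \<times> b) \<times> w)"
    unfolding w_def by (rule embed_rot[OF f u])
  have e2: "embed a' b' q = (q \<bullet> u') *\<^sub>R w + det2 u' q *\<^sub>R ((a' \<times> b') \<times> w)"
    unfolding w' by (rule embed_rot[OF f' u'])
  have c: "((a \<times> b) \<times> w) \<bullet> ((a' \<times> b') \<times> w) = (a \<times> b) \<bullet> (a' \<times> b')"
    using dot_cross[of "a \<times> b" w "a' \<times> b'" w] ww wn wn' by simp
  show ?thesis unfolding e1 e2
    using ww c dot_cross_self(3)[of "a \<times> b" w] dot_cross_self(2)[of w "a' \<times> b'"] by (simp add: inner_add_left inner_add_right algebra_simps)
qed

lemma lin2:
  fixes A B :: real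
  assumes "det2 p q \<noteq> 0" "p$1 * A + p$2 * B = 0" "q$1 * A + q$2 * B = 0"
  shows "A = 0 \<and> B = 0"
proof -
  have "A * det2 p q = q$2 * (p$1 * A + p$2 * B) - p$2 * (q$1 * A + q$2 * B)"
    by (simp add: det2_def algebra_simps)
  moreover have "B * det2 p q = p$1 * (q$1 * A + q$2 * B) - q$1 * (p$1 * A + p$2 * B)"
    by (simp add: det2_def algebra_simps)
  ultimately have "A * det2 p q = 0" "B * det2 p q = 0" using assms(2,3) by simp_all
  then show ?thesis using assms(1) by simp
qed

lemma perp:
  assumes "is_frame a b" "det2 p q \<noteq> 0" "z \<bullet> embed a b p = 0" "z \<bullet> embed a b q = 0"
  shows "z \<bullet> a = 0 \<and> z \<bullet> b = 0"
  using lin2[OF assms(2), of "z \<bullet> a" "z \<bullet> b"] assms(3,4)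
  by (simp add: embed_def inner_add_right mult.commute)

lemma normal_of_perp:
  assumes "is_frame a b" "z \<bullet> a = 0" "z \<bullet> b = 0"
  shows "z = (z \<bullet> (a \<times> b)) *\<^sub>R (a \<times> b)"
  using frame_decomp3[OF assms(1), of z] assms(2,3) by simp

lemma unit2:
  assumes "u \<bullet> u = 1" "w \<bullet> w = 1"
  shows "(u \<bullet> w)^2 + (det2 u w)^2 = 1"
proof -
  have "(u \<bullet> w)^2 + (det2 u w)^2 = (u \<bullet> u) * (w \<bullet> w)"
    by (simp add: inner2 det2_def power2_eq_square algebra_simps)
  then show ?thesis using assms by simp
qed




lemma frame_from_two:
  fixes p1 p2 :: "real^2" and w1 w2 :: "real^3"
  assumes d: "det2 p1 p2 \<noteq> 0" and g1: "w1 \<bullet> w1 = p1 \<bullet> p1" and g2: "w2 \<bullet> w2 = p2 \<bullet> p2"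
    and g12: "w1 \<bullet> w2 = p1 \<bullet> p2"
  shows "\<exists>a b. is_frame a b \<and> embed a b p1 = w1 \<and> embed a b p2 = w2"
proof -
  define d where "d = det2 p1 p2"
  define L where "L x = det2 x p2 / d" for x
  define M where "M x = det2 p1 x / d" for x
  define f where "f x = L x *\<^sub>R w1 + M x *\<^sub>R w2" for x
  have cram: "x = L x *\<^sub>R p1 + M x *\<^sub>R p2" for x
  proof -
    have "d *\<^sub>R x = det2 x p2 *\<^sub>R p1 + det2 p1 x *\<^sub>R p2"
      by (simp add: vec_eq_iff forall_2 det2_def d_def algebra_simps)
    then have "(1/d) *\<^sub>R (d *\<^sub>R x) = (1/d) *\<^sub>R (det2 x p2 *\<^sub>R p1 + det2 p1 x *\<^sub>R p2)" by simp
    then show ?thesis using d unfolding d_def L_def M_def by (simp add: scaleR_add_right)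
  qed
  have iso: "f x \<bullet> f y = x \<bullet> y" for x y
  proof -
    have "x \<bullet> y = (L x *\<^sub>R p1 + M x *\<^sub>R p2) \<bullet> (L y *\<^sub>R p1 + M y *\<^sub>R p2)"
      using cram[of x] cram[of y] by simp
    also have "\<dots> = f x \<bullet> f y"
      unfolding f_def using g1 g2 g12
      by (simp add: inner_add_left inner_add_right inner_commute algebra_simps)
    finally show ?thesis by simp
  qed
  define a where "a = f (vector [1, 0])"
  define b where "b = f (vector [0, 1])"
  have emb: "embed a b x = f x" for x
    unfolding embed_def a_def b_def f_def L_def M_def
    by (simp add: det2_def vector_2 algebra_simps diff_divide_distrib add_divide_distrib)
  have fr: "is_frame a b"
    unfolding is_frame_def norm_eq_1 a_def b_def iso by (simp add: inner2 vector_2)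
  have "f p1 = w1" unfolding f_def L_def M_def d_def using d by (simp add: det2_def)
  moreover have "f p2 = w2" unfolding f_def L_def M_def d_def using d by (simp add: det2_def)
  ultimately show ?thesis using fr emb by blast
qed

lemma ang_unit:
  fixes u w :: "real^2"
  assumes "u \<bullet> u = 1" "w \<bullet> w = 1"
  shows "cos (ang u w) = u \<bullet> w" "sin (ang u w) = \<bar>det2 u w\<bar>" "0 \<le> ang u w" "ang u w \<le> pi"
proof -
  have nu: "norm u = 1" "norm w = 1" using assms by (simp_all add: norm_eq_1)
  have a: "ang u w = arccos (u \<bullet> w)" unfolding ang_def nu by simp
  have b: "\<bar>u \<bullet> w\<bar> \<le> 1" using Cauchy_Schwarz_ineq2[of u w] nu by simp
  then have b1: "-1 \<le> u \<bullet> w" "u \<bullet> w \<le> 1" by auto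
  show "cos (ang u w) = u \<bullet> w" unfolding a using b1 by simp
  have "sin (ang u w) = sqrt (1 - (u \<bullet> w)^2)" unfolding a using b1 by (simp add: sin_arccos)
  also have "1 - (u \<bullet> w)^2 = (det2 u w)^2" using unit2[OF assms] by simp
  finally show "sin (ang u w) = \<bar>det2 u w\<bar>" by simp
  show "0 \<le> ang u w" "ang u w \<le> pi" unfolding a using b1 by (simp_all add: arccos_lbound arccos_ubound)
qed



lemma tri_ineq:
  fixes \<alpha> \<beta> \<gamma> :: real
  assumes r: "0 \<le> \<alpha>" "\<alpha> \<le> pi" "0 \<le> \<beta>" "\<beta> \<le> pi" "0 \<le> \<gamma>" "\<gamma> \<le> pi"
    and s: "sph_tri_strict \<alpha> \<beta> \<gamma>"
  shows "sin \<alpha> > 0" "sin \<beta> > 0" "sin \<gamma> > 0"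
    "\<bar>cos \<gamma> - cos \<alpha> * cos \<beta>\<bar> < sin \<alpha> * sin \<beta>"
proof -
  have t: "\<beta> + \<gamma> > \<alpha>" "\<alpha> + \<gamma> > \<beta>" "\<alpha> + \<beta> > \<gamma>" "\<alpha> + \<beta> + \<gamma> < 2 * pi"
    using s unfolding sph_tri_strict_def by auto
  show "sin \<alpha> > 0" by (rule sin_gt_zero) (use r t in linarith)+
  show "sin \<beta> > 0" by (rule sin_gt_zero) (use r t in linarith)+
  show "sin \<gamma> > 0" by (rule sin_gt_zero) (use r t in linarith)+
  have up: "cos \<gamma> < cos \<bar>\<alpha> - \<beta>\<bar>"
    by (rule cos_monotone_0_pi) (use r t in linarith)+
  have "cos \<bar>\<alpha> - \<beta>\<bar> = cos (\<alpha> - \<beta>)" by (metis abs_minus_commute abs_of_nonneg cos_minus linorder_le_cases minus_diff_eq abs_of_nonpos)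
  then have up': "cos \<gamma> - cos \<alpha> * cos \<beta> < sin \<alpha> * sin \<beta>" using up cos_diff[of \<alpha> \<beta>] by simp
  have lo: "cos (\<alpha> + \<beta>) < cos \<gamma>"
  proof (cases "\<alpha> + \<beta> \<le> pi")
    case True
    show ?thesis by (rule cos_monotone_0_pi) (use r t True in linarith)+
  next
    case False
    have "cos (2 * pi - (\<alpha> + \<beta>)) < cos \<gamma>"
      by (rule cos_monotone_0_pi) (use r t False in linarith)+
    then show ?thesis by simp
  qed
  then have lo': "- (sin \<alpha> * sin \<beta>) < cos \<gamma> - cos \<alpha> * cos \<beta>" using cos_add[of \<alpha> \<beta>] by simp
  show "\<bar>cos \<gamma> - cos \<alpha> * cos \<beta>\<bar> < sin \<alpha> * sin \<beta>" using up' lo' by linarith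
qed




lemma gram_ortho:
  fixes X Y :: "'t \<Rightarrow> real^3"
  assumes s1: "s1 \<in> S" and s2: "s2 \<in> S" and fr: "is_frame (X s1) (X s2)"
    and G: "\<forall>s\<in>S. \<forall>t\<in>S. X s \<bullet> X t = Y s \<bullet> Y t"
  shows "\<exists>A. orthogonal_matrix A \<and> (\<forall>s\<in>S. Y s = A *v X s)"
proof -
  define p1 where "p1 = X s1"
  define p2 where "p2 = X s2"
  define p3 where "p3 = p1 \<times> p2"
  define q1 where "q1 = Y s1"
  define q2 where "q2 = Y s2"
  define q3 where "q3 = q1 \<times> q2"
  have fp: "is_frame p1 p2" using fr p1_def p2_def by simp
  have fq: "is_frame q1 q2"
    using frame_basic(1-3)[OF fr] G s1 s2 unfolding is_frame_def q1_def q2_def norm_eq_1 by metis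
  define ch where "ch s = X s \<bullet> p3" for s
  define chh where "chh s = Y s \<bullet> q3" for s
  have decX: "X s = (X s \<bullet> p1) *\<^sub>R p1 + (X s \<bullet> p2) *\<^sub>R p2 + ch s *\<^sub>R p3" for s
    unfolding ch_def p3_def by (rule frame_decomp3[OF fp])
  have decY: "Y s = (Y s \<bullet> q1) *\<^sub>R q1 + (Y s \<bullet> q2) *\<^sub>R q2 + chh s *\<^sub>R q3" for s
    unfolding chh_def q3_def by (rule frame_decomp3[OF fq])
  have innX: "X s \<bullet> X t = (X s \<bullet> p1) * (X t \<bullet> p1) + (X s \<bullet> p2) * (X t \<bullet> p2) + ch s * ch t" for s t
  proof -
    have "X s \<bullet> X t = X s \<bullet> ((X t \<bullet> p1) *\<^sub>R p1 + (X t \<bullet> p2) *\<^sub>R p2 + ch t *\<^sub>R p3)"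
      using decX[of t] by simp
    then show ?thesis unfolding ch_def by (simp add: inner_add_right algebra_simps)
  qed
  have innY: "Y s \<bullet> Y t = (Y s \<bullet> q1) * (Y t \<bullet> q1) + (Y s \<bullet> q2) * (Y t \<bullet> q2) + chh s * chh t" for s t
  proof -
    have "Y s \<bullet> Y t = Y s \<bullet> ((Y t \<bullet> q1) *\<^sub>R q1 + (Y t \<bullet> q2) *\<^sub>R q2 + chh t *\<^sub>R q3)"
      using decY[of t] by simp
    then show ?thesis unfolding chh_def by (simp add: inner_add_right algebra_simps)
  qed
  have c1: "X s \<bullet> p1 = Y s \<bullet> q1" "X s \<bullet> p2 = Y s \<bullet> q2" if "s \<in> S" for s
    using G that s1 s2 unfolding p1_def p2_def q1_def q2_def by auto
  have cc: "ch s * ch t = chh s * chh t" if "s \<in> S" "t \<in> S" for s t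
    using innX[of s t] innY[of s t] G that c1[OF that(1)] c1[OF that(2)] by simp
  obtain \<epsilon> where e2: "\<epsilon> * \<epsilon> = 1" and e: "\<forall>s\<in>S. chh s = \<epsilon> * ch s"
  proof (cases "\<exists>s0\<in>S. ch s0 \<noteq> 0")
    case True
    then obtain s0 where s0: "s0 \<in> S" "ch s0 \<noteq> 0" by blast
    have sq: "chh s0 * chh s0 = ch s0 * ch s0" using cc[OF s0(1) s0(1)] by simp
    then have nz: "chh s0 \<noteq> 0" using s0 by auto
    define \<epsilon> where "\<epsilon> = chh s0 / ch s0"
    have "\<epsilon> * \<epsilon> = 1" unfolding \<epsilon>_def using sq s0(2) by (simp add: field_simps)
    moreover have "chh s = \<epsilon> * ch s" if "s \<in> S" for s
    proof -
      have "chh s * chh s0 = ch s * ch s0" using cc[OF that s0(1)] by simp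
      then have "chh s * chh s0 * chh s0 = ch s * ch s0 * chh s0" by simp
      then have "chh s * (ch s0 * ch s0) = ch s * ch s0 * chh s0" using sq by (simp add: mult.assoc)
      then show ?thesis unfolding \<epsilon>_def using s0(2) by (simp add: field_simps)
    qed
    ultimately show ?thesis using that by blast
  next
    case False
    have "chh s = 1 * ch s" if "s \<in> S" for s
      using cc[OF that that] False that by simp
    then show ?thesis using that[of 1] by simp
  qed
  define f where "f x = (x \<bullet> p1) *\<^sub>R q1 + (x \<bullet> p2) *\<^sub>R q2 + (\<epsilon> * (x \<bullet> p3)) *\<^sub>R q3" for x
  have lin: "linear f"
    unfolding linear_iff f_def by (simp add: inner_add_left algebra_simps)
  have fq': "q3 \<bullet> q1 = 0" "q3 \<bullet> q2 = 0" "q3 \<bullet> q3 = 1" "q1 \<bullet> q3 = 0" "q2 \<bullet> q3 = 0"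
    using frame_basic[OF fq] unfolding q3_def by simp_all
  have ot: "orthogonal_transformation f"
    unfolding orthogonal_transformation_def
  proof (intro conjI allI lin)
    fix v w :: "real^3"
    have "f v \<bullet> f w = (v \<bullet> p1) * (w \<bullet> p1) + (v \<bullet> p2) * (w \<bullet> p2) + (\<epsilon> * \<epsilon>) * ((v \<bullet> p3) * (w \<bullet> p3))"
      unfolding f_def using frame_basic[OF fq] fq'
      by (simp add: inner_add_left inner_add_right algebra_simps)
    also have "\<dots> = v \<bullet> ((w \<bullet> p1) *\<^sub>R p1 + (w \<bullet> p2) *\<^sub>R p2 + (w \<bullet> p3) *\<^sub>R p3)"
      using e2 by (simp add: inner_add_right algebra_simps)
    also have "\<dots> = v \<bullet> w" using frame_decomp3[OF fp, of w] unfolding p3_def by simp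
    finally show "f v \<bullet> f w = v \<bullet> w" .
  qed
  have om: "orthogonal_matrix (matrix f)" using ot orthogonal_transformation_matrix by blast
  have mv: "matrix f *v x = f x" for x using matrix_vector_mul(2)[OF lin] by metis
  have "Y s = matrix f *v X s" if "s \<in> S" for s
  proof -
    have "f (X s) = (Y s \<bullet> q1) *\<^sub>R q1 + (Y s \<bullet> q2) *\<^sub>R q2 + chh s *\<^sub>R q3"
      unfolding f_def using c1[OF that] e that by (simp add: ch_def)
    then show ?thesis using decY[of s] mv by simp
  qed
  then show ?thesis using om by blast
qed




lemma plane_iff:
  assumes f: "is_frame a b"
  shows "x \<in> plane a b \<longleftrightarrow> x \<bullet> (a \<times> b) = 0"
proof
  assume "x \<in> plane a b"
  then obtain k l where "x - k *\<^sub>R a - l *\<^sub>R b = 0"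
    unfolding plane_def span_insert span_singleton by auto
  then have "x = k *\<^sub>R a + l *\<^sub>R b" by (simp add: algebra_simps)
  then show "x \<bullet> (a \<times> b) = 0" using frame_basic[OF f] by (simp add: inner_add_left)
next
  assume "x \<bullet> (a \<times> b) = 0"
  then have "x = (x \<bullet> a) *\<^sub>R a + (x \<bullet> b) *\<^sub>R b" using frame_decomp3[OF f, of x] by simp
  moreover have "(x \<bullet> a) *\<^sub>R a + (x \<bullet> b) *\<^sub>R b \<in> span {a, b}"
    by (intro span_add span_scale span_base) auto
  ultimately show "x \<in> plane a b" unfolding plane_def by simp
qed

lemma embed_in_plane: "is_frame a b \<Longrightarrow> embed a b p \<in> plane a b"
  using plane_iff embed_normal by blast

lemma zero_two_normals:
  fixes z n1 n2 :: "real^3"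
  assumes "z = \<alpha> *\<^sub>R n1" "z = \<beta> *\<^sub>R n2" "n1 \<bullet> n1 = 1" "n2 \<bullet> n2 = 1" "\<bar>n1 \<bullet> n2\<bar> < 1"
  shows "z = 0"
proof -
  have a: "\<alpha> = \<beta> * (n1 \<bullet> n2)" using arg_cong[OF assms(1), of "\<lambda>x. x \<bullet> n1"] assms(2,3)
    by (simp add: inner_commute)
  have b: "\<beta> = \<alpha> * (n1 \<bullet> n2)" using arg_cong[OF assms(2), of "\<lambda>x. x \<bullet> n2"] assms(1,4)
    by simp
  have "\<alpha> * (1 - (n1 \<bullet> n2) * (n1 \<bullet> n2)) = 0" using a b by (simp add: algebra_simps)
  moreover have "(n1 \<bullet> n2) * (n1 \<bullet> n2) < 1" using assms(5)
    using abs_square_less_1[of "n1 \<bullet> n2"] by (simp add: power2_eq_square)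
  ultimately have "\<alpha> = 0" by simp
  then show ?thesis using assms(1) by simp
qed




definition cc :: "(nat \<Rightarrow> nat \<Rightarrow> real^2) \<Rightarrow> nat \<Rightarrow> nat \<Rightarrow> nat \<Rightarrow> real" where
  "cc u i j k = u i j \<bullet> u i k"
definition ss :: "(nat \<Rightarrow> nat \<Rightarrow> real^2) \<Rightarrow> nat \<Rightarrow> nat \<Rightarrow> nat \<Rightarrow> real" where
  "ss u i j k = det2 (u i j) (u i k)"
definition DD :: "(nat \<Rightarrow> nat \<Rightarrow> real^2) \<Rightarrow> nat \<Rightarrow> nat \<Rightarrow> nat \<Rightarrow> real" where
  "DD u i j k = (cc u k i j - cc u i j k * cc u j i k) / (ss u i j k * ss u j i k)"
definition rz :: "(nat \<Rightarrow> real^3) \<Rightarrow> (nat \<Rightarrow> real^3) \<Rightarrow> (nat \<Rightarrow> nat \<Rightarrow> real^2) \<Rightarrow> nat \<Rightarrow> nat \<Rightarrow> bool" where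
  "rz a b u i j \<longleftrightarrow> embed (a i) (b i) (u i j) = embed (a j) (b j) (u j i)"

lemma rz_sym: "rz a b u i j \<Longrightarrow> rz a b u j i" unfolding rz_def by simp

lemma DD_sym: "DD u i j k = DD u j i k"
  unfolding DD_def cc_def by (simp add: inner_commute mult.commute)

lemma tri_dot:
  assumes fi: "is_frame (a i) (b i)" and fj: "is_frame (a j) (b j)" and fk: "is_frame (a k) (b k)"
    and u: "u i j \<bullet> u i j = 1" "u j i \<bullet> u j i = 1"
    and r: "rz a b u i j" "rz a b u i k" "rz a b u j k"
    and s: "ss u i j k \<noteq> 0" "ss u j i k \<noteq> 0"
  shows "(a i \<times> b i) \<bullet> (a j \<times> b j) = DD u i j k"
proof -
  have g: "embed (a i) (b i) (u i k) \<bullet> embed (a j) (b j) (u j k)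
      = (u i k \<bullet> u i j) * (u j k \<bullet> u j i) + det2 (u i j) (u i k) * det2 (u j i) (u j k) * ((a i \<times> b i) \<bullet> (a j \<times> b j))"
    by (rule gram[OF fi fj u]) (use r(1) in \<open>simp add: rz_def\<close>)
  have "embed (a i) (b i) (u i k) \<bullet> embed (a j) (b j) (u j k) = cc u k i j"
    using r(2,3) embed_inner[OF fk] unfolding rz_def cc_def by simp
  then have "cc u k i j = cc u i j k * cc u j i k + ss u i j k * ss u j i k * ((a i \<times> b i) \<bullet> (a j \<times> b j))"
    using g unfolding cc_def ss_def by (simp add: inner_commute)
  then show ?thesis unfolding DD_def using s by (simp add: field_simps)
qed

lemma L_D:
  assumes L: "Lval v i j k m = 0" and u: "u = unitv v"
    and s: "ss u i j k \<noteq> 0" "ss u j i k \<noteq> 0" "ss u i j m \<noteq> 0" "ss u j i m \<noteq> 0"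
  shows "DD u i j k = DD u i j m"
proof -
  define S where "S = ss u i j k * ss u j i k"
  define S' where "S' = ss u i j m * ss u j i m"
  define X where "X = cc u k i j - cc u i j k * cc u j i k"
  define Y where "Y = cc u m i j - cc u i j m * cc u j i m"
  have S0: "S \<noteq> 0" "S' \<noteq> 0" using s unfolding S_def S'_def by auto
  have "X * \<bar>S'\<bar> - sgn (S * S') * Y * \<bar>S\<bar> = 0"
    using L unfolding Lval_def Let_def u[symmetric] X_def Y_def S_def S'_def cc_def ss_def
    by (simp add: mult.commute mult.left_commute mult.assoc)
  then have "X / S = Y / S'" using S0
    by (cases "S > 0"; cases "S' > 0") (auto simp: sgn_mult field_simps abs_if split: if_splits)
  then show ?thesis unfolding DD_def X_def Y_def S_def S'_def .
qed




lemma half: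
  assumes fp: "is_frame (a p) (b p)" and fq: "is_frame (a q) (b q)"
    and fk: "is_frame (a k) (b k)" and fm: "is_frame (a m) (b m)"
    and u: "u k p \<bullet> u k p = 1" "u p k \<bullet> u p k = 1" "u m p \<bullet> u m p = 1" "u p m \<bullet> u p m = 1"
    and r: "rz a b u p k" "rz a b u p m" "rz a b u p q" "rz a b u k q" "rz a b u m q"
    and s: "ss u k p q \<noteq> 0" "ss u p k q \<noteq> 0" "ss u m p q \<noteq> 0" "ss u p m q \<noteq> 0"
           "ss u k p m \<noteq> 0" "ss u p k m \<noteq> 0" "ss u m p k \<noteq> 0" "ss u p m k \<noteq> 0"
    and D: "DD u k p q = DD u k p m" "DD u m p q = DD u m p k"
  shows "(embed (a k) (b k) (u k m) - embed (a m) (b m) (u m k)) \<bullet> embed (a p) (b p) (u p k) = 0 \<and>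
         (embed (a k) (b k) (u k m) - embed (a m) (b m) (u m k)) \<bullet> embed (a p) (b p) (u p m) = 0"
proof -
  have nkp: "(a k \<times> b k) \<bullet> (a p \<times> b p) = DD u k p m"
    using tri_dot[OF fk fp fq u(1,2) rz_sym[OF r(1)] r(4) r(3) s(1,2)] D(1) by simp
  have nmp: "(a m \<times> b m) \<bullet> (a p \<times> b p) = DD u m p k"
    using tri_dot[OF fm fp fq u(3,4) rz_sym[OF r(2)] r(5) r(3) s(3,4)] D(2) by simp
  have x1: "embed (a k) (b k) (u k m) \<bullet> embed (a p) (b p) (u p m) = u m k \<bullet> u m p"
  proof -
    have "embed (a k) (b k) (u k m) \<bullet> embed (a p) (b p) (u p m)
      = (u k m \<bullet> u k p) * (u p m \<bullet> u p k) + det2 (u k p) (u k m) * det2 (u p k) (u p m) * ((a k \<times> b k) \<bullet> (a p \<times> b p))"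
      by (rule gram[OF fk fp u(1,2)]) (use r(1) in \<open>simp add: rz_def\<close>)
    also have "\<dots> = cc u m k p" using s(5,6) unfolding nkp DD_def cc_def ss_def
      by (simp add: inner_commute field_simps)
    finally show ?thesis unfolding cc_def .
  qed
  have y1: "embed (a m) (b m) (u m k) \<bullet> embed (a p) (b p) (u p m) = u m k \<bullet> u m p"
    using r(2) embed_inner[OF fm] unfolding rz_def by simp
  have x2: "embed (a k) (b k) (u k m) \<bullet> embed (a p) (b p) (u p k) = u k m \<bullet> u k p"
    using r(1) embed_inner[OF fk] unfolding rz_def by simp
  have y2: "embed (a m) (b m) (u m k) \<bullet> embed (a p) (b p) (u p k) = u k m \<bullet> u k p"
  proof -
    have "embed (a m) (b m) (u m k) \<bullet> embed (a p) (b p) (u p k)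
      = (u m k \<bullet> u m p) * (u p k \<bullet> u p m) + det2 (u m p) (u m k) * det2 (u p m) (u p k) * ((a m \<times> b m) \<bullet> (a p \<times> b p))"
      by (rule gram[OF fm fp u(3,4)]) (use r(2) in \<open>simp add: rz_def\<close>)
    also have "\<dots> = cc u k m p" using s(7,8) unfolding nmp DD_def cc_def ss_def
      by (simp add: inner_commute field_simps)
    finally show ?thesis unfolding cc_def .
  qed
  show ?thesis using x1 y1 x2 y2 by (simp add: inner_diff_left)
qed




definition good :: "nat \<Rightarrow> (nat \<Rightarrow> nat \<Rightarrow> real^2) \<Rightarrow> bool" where
  "good N u \<longleftrightarrow>
    (\<forall>i\<in>{1..N}. \<forall>j\<in>{1..N}. i \<noteq> j \<longrightarrow> u i j \<bullet> u i j = 1) \<and>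
    (\<forall>i\<in>{1..N}. \<forall>j\<in>{1..N}. \<forall>k\<in>{1..N}. distinct [i,j,k] \<longrightarrow> ss u i j k \<noteq> 0 \<and> \<bar>DD u i j k\<bar> < 1) \<and>
    (\<forall>i\<in>{1..N}. \<forall>j\<in>{1..N}. \<forall>k\<in>{1..N}. \<forall>m\<in>{1..N}. distinct [i,j,k,m] \<longrightarrow> DD u i j k = DD u i j m)"

lemma goodD:
  assumes "good N u"
  shows "\<And>i j. i \<in> {1..N} \<Longrightarrow> j \<in> {1..N} \<Longrightarrow> i \<noteq> j \<Longrightarrow> u i j \<bullet> u i j = 1"
    and "\<And>i j k. i \<in> {1..N} \<Longrightarrow> j \<in> {1..N} \<Longrightarrow> k \<in> {1..N} \<Longrightarrow> distinct [i,j,k] \<Longrightarrow> ss u i j k \<noteq> 0"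
    and "\<And>i j k. i \<in> {1..N} \<Longrightarrow> j \<in> {1..N} \<Longrightarrow> k \<in> {1..N} \<Longrightarrow> distinct [i,j,k] \<Longrightarrow> \<bar>DD u i j k\<bar> < 1"
    and "\<And>i j k m. i \<in> {1..N} \<Longrightarrow> j \<in> {1..N} \<Longrightarrow> k \<in> {1..N} \<Longrightarrow> m \<in> {1..N} \<Longrightarrow> distinct [i,j,k,m] \<Longrightarrow> DD u i j k = DD u i j m"
  using assms unfolding good_def by blast+

lemma consist:
  assumes g: "good N u"
    and idx: "p \<in> {1..N}" "q \<in> {1..N}" "k \<in> {1..N}" "m \<in> {1..N}" and dist: "distinct [p,q,k,m]"
    and fp: "is_frame (a p) (b p)" and fq: "is_frame (a q) (b q)"
    and fk: "is_frame (a k) (b k)" and fm: "is_frame (a m) (b m)"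
    and r: "rz a b u p k" "rz a b u p m" "rz a b u p q" "rz a b u q k" "rz a b u q m"
    and npq: "\<bar>(a p \<times> b p) \<bullet> (a q \<times> b q)\<bar> < 1"
  shows "rz a b u k m"
proof -
  note U = goodD(1)[OF g] and S = goodD(2)[OF g] and D = goodD(4)[OF g]
  have SS: "ss u x y w \<noteq> 0" if "x \<in> {p,q,k,m}" "y \<in> {p,q,k,m}" "w \<in> {p,q,k,m}" "distinct [x,y,w]" for x y w
    using S[of x y w] idx that by blast
  have UU: "u x y \<bullet> u x y = 1" if "x \<in> {p,q,k,m}" "y \<in> {p,q,k,m}" "x \<noteq> y" for x y
    using U[of x y] idx that by blast
  have DD4: "DD u x y w = DD u x y t" if "x \<in> {p,q,k,m}" "y \<in> {p,q,k,m}" "w \<in> {p,q,k,m}" "t \<in> {p,q,k,m}" "distinct [x,y,w,t]" for x y w t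
    using D[of x y w t] idx that by blast
  define z where "z = embed (a k) (b k) (u k m) - embed (a m) (b m) (u m k)"
  have hp: "z \<bullet> embed (a p) (b p) (u p k) = 0 \<and> z \<bullet> embed (a p) (b p) (u p m) = 0"
    unfolding z_def
    by (rule half[OF fp fq fk fm])
       (use dist r in \<open>simp_all add: SS UU DD4 rz_sym\<close>)
  have hq: "z \<bullet> embed (a q) (b q) (u q k) = 0 \<and> z \<bullet> embed (a q) (b q) (u q m) = 0"
    unfolding z_def
    by (rule half[OF fq fp fk fm])
       (use dist r in \<open>simp_all add: SS UU DD4 rz_sym\<close>)
  have sp: "det2 (u p k) (u p m) \<noteq> 0" using S[of p k m] idx dist unfolding ss_def by auto
  have sq: "det2 (u q k) (u q m) \<noteq> 0" using S[of q k m] idx dist unfolding ss_def by auto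
  have zp: "z = (z \<bullet> (a p \<times> b p)) *\<^sub>R (a p \<times> b p)"
    using perp[OF fp sp] hp normal_of_perp[OF fp] by blast
  have zq: "z = (z \<bullet> (a q \<times> b q)) *\<^sub>R (a q \<times> b q)"
    using perp[OF fq sq] hq normal_of_perp[OF fq] by blast
  have "z = 0" by (rule zero_two_normals[OF zp zq frame_basic(11)[OF fp] frame_basic(11)[OF fq] npq])
  then show ?thesis unfolding z_def rz_def by simp
qed




lemma inner3v: "(vector [x1, x2, x3] :: real^3) \<bullet> vector [y1, y2, y3] = x1*y1 + x2*y2 + x3*y3"
  by (simp add: inner3 vector_3)

lemma exist:
  assumes g: "good N u" and N: "N \<ge> 3"
  shows "\<exists>a b. frames N a b \<and> (\<forall>i\<in>{1..N}. \<forall>j\<in>{1..N}. i \<noteq> j \<longrightarrow> rz a b u i j)"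
proof -
  note U = goodD(1)[OF g] and S = goodD(2)[OF g] and DL = goodD(3)[OF g] and D = goodD(4)[OF g]
  have i123: "1 \<in> {1..N}" "2 \<in> {1..N}" "3 \<in> {1..N}" using N by auto
  define x where "x = cc u 1 2 3"
  define y where "y = cc u 2 1 3"
  define z where "z = cc u 3 1 2"
  define s1 where "s1 = ss u 1 2 3"
  define s2 where "s2 = ss u 2 1 3"
  have s1nz: "s1 \<noteq> 0" unfolding s1_def using S[of 1 2 3] i123 by simp
  have s2nz: "s2 \<noteq> 0" unfolding s2_def using S[of 2 1 3] i123 by simp
  have xs: "x^2 + s1^2 = 1" unfolding x_def s1_def cc_def ss_def
    using unit2[OF U[of 1 2] U[of 1 3]] i123 by simp
  have ys: "y^2 + s2^2 = 1" unfolding y_def s2_def cc_def ss_def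
    using unit2[OF U[of 2 1] U[of 2 3]] i123 by simp
  have Dlt: "\<bar>(z - x*y) / (s1 * s2)\<bar> < 1" using DL[of 1 2 3] i123
    unfolding DD_def x_def y_def z_def s1_def s2_def by simp
  then have zlt: "\<bar>z - x*y\<bar> < \<bar>s1\<bar> * \<bar>s2\<bar>" using s1nz s2nz by (simp add: abs_mult divide_less_eq)
  define t where "t = (z - x*y) / s1"
  have tlt: "\<bar>t\<bar> < \<bar>s2\<bar>" unfolding t_def using zlt s1nz by (simp add: abs_divide divide_less_eq mult.commute)
  have t2: "t^2 < s2^2" using tlt by (metis abs_ge_zero abs_power2 power2_abs power_strict_mono zero_less_numeral)
  define r where "r = sqrt (1 - y^2 - t^2)"
  have r2: "r^2 = 1 - y^2 - t^2" unfolding r_def using t2 ys by simp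
  have xyz: "x * y + s1 * t = z" unfolding t_def using s1nz by simp
  define W12 where "W12 = (vector [1, 0, 0] :: real^3)"
  define W13 where "W13 = (vector [x, s1, 0] :: real^3)"
  define W23 where "W23 = (vector [y, t, r] :: real^3)"
  have W: "W12 \<bullet> W12 = 1" "W13 \<bullet> W13 = 1" "W23 \<bullet> W23 = 1" "W12 \<bullet> W13 = x" "W12 \<bullet> W23 = y"
    "W13 \<bullet> W23 = z"
    unfolding W12_def W13_def W23_def inner3v using xs r2 xyz by (simp_all add: power2_eq_square)
  obtain a1 b1 where f1: "is_frame a1 b1" and e12: "embed a1 b1 (u 1 2) = W12" and e13: "embed a1 b1 (u 1 3) = W13"
    using frame_from_two[of "u 1 2" "u 1 3" W12 W13] s1nz W U[of 1 2] U[of 1 3] i123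
    unfolding s1_def ss_def x_def cc_def by auto
  obtain a2 b2 where f2: "is_frame a2 b2" and e21: "embed a2 b2 (u 2 1) = W12" and e23: "embed a2 b2 (u 2 3) = W23"
    using frame_from_two[of "u 2 1" "u 2 3" W12 W23] s2nz W U[of 2 1] U[of 2 3] i123
    unfolding s2_def ss_def y_def cc_def by auto
  have gr12: "embed a1 b1 p \<bullet> embed a2 b2 q = (p \<bullet> u 1 2) * (q \<bullet> u 2 1) + det2 (u 1 2) p * det2 (u 2 1) q * ((a1 \<times> b1) \<bullet> (a2 \<times> b2))" for p q
    by (rule gram[OF f1 f2]) (use U[of 1 2] U[of 2 1] i123 e12 e21 in auto)
  have n12: "(a1 \<times> b1) \<bullet> (a2 \<times> b2) = DD u 1 2 3"
  proof -
    have "z = x * y + s1 * s2 * ((a1 \<times> b1) \<bullet> (a2 \<times> b2))"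
      using gr12[of "u 1 3" "u 2 3"] e13 e23 W(6)
      unfolding x_def y_def s1_def s2_def cc_def ss_def by (simp add: inner_commute)
    then show ?thesis unfolding DD_def using s1nz s2nz
      unfolding x_def y_def z_def s1_def s2_def by (simp add: field_simps)
  qed
  have n12lt: "\<bar>(a1 \<times> b1) \<bullet> (a2 \<times> b2)\<bar> < 1" using n12 DL[of 1 2 3] i123 by simp
  define K where "K = {1..N} - {1,2}"
  have ex: "\<exists>ab. is_frame (fst ab) (snd ab) \<and> embed (fst ab) (snd ab) (u k 1) = embed a1 b1 (u 1 k)
      \<and> embed (fst ab) (snd ab) (u k 2) = embed a2 b2 (u 2 k)" if k: "k \<in> K" for k
  proof -
    have kk: "k \<in> {1..N}" "k \<noteq> 1" "k \<noteq> 2" using k K_def by auto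
    have D12k: "DD u 1 2 3 = DD u 1 2 k"
    proof (cases "k = 3")
      case False then show ?thesis using D[of 1 2 3 k] i123 kk by simp
    qed simp
    have dot: "embed a1 b1 (u 1 k) \<bullet> embed a2 b2 (u 2 k) = u k 1 \<bullet> u k 2"
    proof -
      have "embed a1 b1 (u 1 k) \<bullet> embed a2 b2 (u 2 k) = cc u 1 2 k * cc u 2 1 k + ss u 1 2 k * ss u 2 1 k * DD u 1 2 k"
        using gr12[of "u 1 k" "u 2 k"] n12 D12k unfolding cc_def ss_def by (simp add: inner_commute)
      also have "\<dots> = cc u k 1 2" unfolding DD_def using S[of 1 2 k] S[of 2 1 k] i123 kk
        by (simp add: field_simps)
      finally show ?thesis unfolding cc_def .
    qed
    have "\<exists>a b. is_frame a b \<and> embed a b (u k 1) = embed a1 b1 (u 1 k) \<and> embed a b (u k 2) = embed a2 b2 (u 2 k)"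
      by (rule frame_from_two)
        (use S[of k 1 2] U[of k 1] U[of k 2] U[of 1 k] U[of 2 k] i123 kk dot embed_inner[OF f1] embed_inner[OF f2]
          in \<open>auto simp: ss_def\<close>)
    then show ?thesis by auto
  qed
  from bchoice[OF ballI[OF ex]] obtain G where G: "\<forall>k\<in>K. is_frame (fst (G k)) (snd (G k)) \<and> embed (fst (G k)) (snd (G k)) (u k 1) = embed a1 b1 (u 1 k)
      \<and> embed (fst (G k)) (snd (G k)) (u k 2) = embed a2 b2 (u 2 k)"
    ..
  define A where "A i = (if i = 1 then a1 else if i = 2 then a2 else fst (G i))" for i
  define B where "B i = (if i = 1 then b1 else if i = 2 then b2 else snd (G i))" for i
  have A1: "A 1 = a1" "B 1 = b1" "A 2 = a2" "B 2 = b2" unfolding A_def B_def by simp_all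
  have AK: "A k = fst (G k)" "B k = snd (G k)" if "k \<in> K" for k using that unfolding A_def B_def K_def by auto
  have fr: "frames N A B" unfolding frames_def
  proof
    fix i assume i: "i \<in> {1..N}"
    show "is_frame (A i) (B i)"
    proof (cases "i \<in> K")
      case True then show ?thesis using G AK by auto
    next
      case False then have "i = 1 \<or> i = 2" using i K_def by auto
      then show ?thesis using A1 f1 f2 by auto
    qed
  qed
  have R12: "rz A B u 1 2" unfolding rz_def A1 using e12 e21 by simp
  have R1k: "rz A B u 1 k" "rz A B u 2 k" if "k \<in> K" for k
    unfolding rz_def A1 using G AK[OF that] that by auto
  have frK: "is_frame (A k) (B k)" if "k \<in> {1..N}" for k using fr that unfolding frames_def by auto
  have RR: "rz A B u i j" if "i \<in> {1..N}" "j \<in> {1..N}" "i \<noteq> j" for i j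
  proof -
    consider "i \<in> K" "j \<in> K" | "i \<notin> K" | "j \<notin> K" by blast
    then show ?thesis
    proof cases
      case 1
      have "rz A B u i j"
        by (rule consist[OF g i123(1) i123(2) that(1,2) _ frK frK frK frK])
           (use 1 K_def that R12 R1k n12lt A1 in auto)
      then show ?thesis .
    next
      case 2 then have "i = 1 \<or> i = 2" using that K_def by auto
      then show ?thesis using R12 rz_sym[OF R12] R1k[of j] that K_def by (cases "j \<in> K") auto
    next
      case 3 then have "j = 1 \<or> j = 2" using that K_def by auto
      then show ?thesis using R12 rz_sym[OF R12] rz_sym[OF R1k(1)[of i]] rz_sym[OF R1k(2)[of i]] that K_def by (cases "i \<in> K") auto
    qed
  qed
  show ?thesis using fr RR by blast
qed




lemma third_index:
  fixes N i j :: nat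
  assumes "N \<ge> 3" "i \<in> {1..N}" "j \<in> {1..N}"
  shows "\<exists>k\<in>{1..N}. k \<noteq> i \<and> k \<noteq> j"
proof -
  have "{1::nat,2,3} \<subseteq> {1..N}" using assms(1) by auto
  moreover have "\<exists>k\<in>{1::nat,2,3}. k \<noteq> i \<and> k \<noteq> j" by auto
  ultimately show ?thesis by blast
qed

lemma normals_dot:
  assumes g: "good N u" and N: "N \<ge> 3" and fr: "frames N a b"
    and R: "\<forall>i\<in>{1..N}. \<forall>j\<in>{1..N}. i \<noteq> j \<longrightarrow> rz a b u i j"
    and ij: "i \<in> {1..N}" "j \<in> {1..N}" "i \<noteq> j"
  shows "\<exists>k\<in>{1..N}. k \<noteq> i \<and> k \<noteq> j \<and> (a i \<times> b i) \<bullet> (a j \<times> b j) = DD u i j k"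
proof -
  obtain k where k: "k \<in> {1..N}" "k \<noteq> i" "k \<noteq> j" using third_index[OF N ij(1,2)] by blast
  have "(a i \<times> b i) \<bullet> (a j \<times> b j) = DD u i j k"
    by (rule tri_dot) (use fr R ij k goodD(1,2)[OF g] in \<open>auto simp: frames_def\<close>)
  then show ?thesis using k by blast
qed

lemma normals_lt:
  assumes g: "good N u" and N: "N \<ge> 3" and fr: "frames N a b"
    and R: "\<forall>i\<in>{1..N}. \<forall>j\<in>{1..N}. i \<noteq> j \<longrightarrow> rz a b u i j"
    and ij: "i \<in> {1..N}" "j \<in> {1..N}" "i \<noteq> j"
  shows "\<bar>(a i \<times> b i) \<bullet> (a j \<times> b j)\<bar> < 1"
  using normals_dot[OF assms] goodD(3)[OF g] ij by force

lemma n_zero_contra: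
  assumes fi: "is_frame (a i) (b i)" and fr: "is_frame (a r) (b r)"
    and lt: "\<bar>(a r \<times> b r) \<bullet> (a i \<times> b i)\<bar> < 1"
    and p: "(a r \<times> b r) \<bullet> a i = 0" "(a r \<times> b r) \<bullet> b i = 0"
  shows False
proof -
  have h2: "a r \<times> b r = ((a r \<times> b r) \<bullet> (a i \<times> b i)) *\<^sub>R (a i \<times> b i)"
    using normal_of_perp[OF fi p] .
  have h1: "a r \<times> b r = 1 *\<^sub>R (a r \<times> b r)" by simp
  have "a r \<times> b r = 0"
    by (rule zero_two_normals[OF h1 h2 frame_basic(11)[OF fr] frame_basic(11)[OF fi] lt])
  then show False using frame_basic(11)[OF fr] by simp
qed

lemma gen:
  assumes g: "good N u" and N: "N \<ge> 3" and fr: "frames N a b"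
    and R: "\<forall>i\<in>{1..N}. \<forall>j\<in>{1..N}. i \<noteq> j \<longrightarrow> rz a b u i j"
  shows "generic N a b"
proof -
  have F: "is_frame (a i) (b i)" if "i \<in> {1..N}" for i using fr that unfolding frames_def by auto
  have LT: "\<bar>(a i \<times> b i) \<bullet> (a j \<times> b j)\<bar> < 1" if "i \<in> {1..N}" "j \<in> {1..N}" "i \<noteq> j" for i j
    using normals_lt[OF g N fr R that] .
  have P1: "plane (a i) (b i) \<noteq> plane (a j) (b j)" if ij: "i \<in> {1..N}" "j \<in> {1..N}" "i \<noteq> j" for i j
  proof
    assume eq: "plane (a i) (b i) = plane (a j) (b j)"
    have "a j \<in> plane (a j) (b j)" "b j \<in> plane (a j) (b j)" unfolding plane_def
      by (auto intro: span_base)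
    then have "a j \<in> plane (a i) (b i)" "b j \<in> plane (a i) (b i)" using eq by auto
    then have "(a i \<times> b i) \<bullet> a j = 0" "(a i \<times> b i) \<bullet> b j = 0"
      using plane_iff[OF F[OF ij(1)]] by (auto simp: inner_commute)
    then show False using n_zero_contra[OF F[OF ij(2)] F[OF ij(1)] LT[OF ij]] by blast
  qed
  have P2: "plane (a i) (b i) \<inter> plane (a j) (b j) \<noteq> plane (a k) (b k) \<inter> plane (a l) (b l)"
    if idx: "i \<in> {1..N}" "j \<in> {1..N}" "k \<in> {1..N}" "l \<in> {1..N}" and o: "i < j" "k < l" "(i, j) \<noteq> (k, l)"
    for i j k l
  proof
    assume eq: "plane (a i) (b i) \<inter> plane (a j) (b j) = plane (a k) (b k) \<inter> plane (a l) (b l)"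
    have "\<exists>r\<in>{k, l}. r \<noteq> i \<and> r \<noteq> j"
    proof (cases "k \<noteq> i \<and> k \<noteq> j")
      case True then show ?thesis by blast
    next
      case False
      then have "l \<noteq> i \<and> l \<noteq> j" using o by auto
      then show ?thesis by blast
    qed
    then obtain r where r: "r \<in> {k, l}" "r \<noteq> i" "r \<noteq> j" by blast
    have rN: "r \<in> {1..N}" using r idx by auto
    define w where "w = embed (a i) (b i) (u i j)"
    have wi: "w \<in> plane (a i) (b i)" unfolding w_def using embed_in_plane[OF F[OF idx(1)]] .
    have rij: "embed (a i) (b i) (u i j) = embed (a j) (b j) (u j i)"
      using R idx(1,2) o(1) unfolding rz_def by auto
    have wj: "w \<in> plane (a j) (b j)" unfolding w_def rij by (rule embed_in_plane[OF F[OF idx(2)]])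
    have wij: "w \<in> plane (a i) (b i) \<inter> plane (a j) (b j)" using wi wj by blast
    have wkl: "w \<in> plane (a k) (b k) \<inter> plane (a l) (b l)" using wij unfolding eq .
    have "r = k \<or> r = l" using r(1) by blast
    then have "w \<in> plane (a r) (b r)" using wkl by blast
    then have w0: "w \<bullet> (a r \<times> b r) = 0" using plane_iff[OF F[OF rN]] by simp
    have w'0: "embed (a i) (b i) (u i r) \<bullet> (a r \<times> b r) = 0"
    proof -
      have "embed (a i) (b i) (u i r) = embed (a r) (b r) (u r i)"
        using R idx(1) rN r(2) unfolding rz_def by auto
      then show ?thesis using embed_normal[OF F[OF rN]] by simp
    qed
    have s: "det2 (u i j) (u i r) \<noteq> 0" using goodD(2)[OF g, of i j r] idx rN r o unfolding ss_def by auto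
    have "(a r \<times> b r) \<bullet> a i = 0 \<and> (a r \<times> b r) \<bullet> b i = 0"
      by (rule perp[OF F[OF idx(1)] s]) (use w0 w'0 w_def in \<open>auto simp: inner_commute\<close>)
    then show False using n_zero_contra[OF F[OF idx(1)] F[OF rN] LT[OF rN idx(1)]] r by auto
  qed
  show ?thesis unfolding generic_def using P1 P2 by blast
qed

lemma uniq:
  assumes g: "good N u" and N: "N \<ge> 3"
    and fr: "frames N a b" and R: "\<forall>i\<in>{1..N}. \<forall>j\<in>{1..N}. i \<noteq> j \<longrightarrow> rz a b u i j"
    and fr': "frames N a' b'" and R': "\<forall>i\<in>{1..N}. \<forall>j\<in>{1..N}. i \<noteq> j \<longrightarrow> rz a' b' u i j"
  shows "\<exists>A :: real^3^3. orthogonal_matrix A \<and> (\<forall>i\<in>{1..N}. a' i = A *v a i \<and> b' i = A *v b i)"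
proof -
  have F: "is_frame (a i) (b i)" "is_frame (a' i) (b' i)" if "i \<in> {1..N}" for i
    using fr fr' that unfolding frames_def by auto
  have gr: "embed (a i) (b i) p \<bullet> embed (a j) (b j) q = embed (a' i) (b' i) p \<bullet> embed (a' j) (b' j) q"
    if ij: "i \<in> {1..N}" "j \<in> {1..N}" for i j p q
  proof (cases "i = j")
    case True then show ?thesis using embed_inner F ij by simp
  next
    case False
    obtain k where k: "k \<in> {1..N}" "k \<noteq> i" "k \<noteq> j" using third_index[OF N ij] by blast
    have n1: "(a i \<times> b i) \<bullet> (a j \<times> b j) = DD u i j k"
      by (rule tri_dot) (use fr R ij k False goodD(1,2)[OF g] in \<open>auto simp: frames_def\<close>)
    have n2: "(a' i \<times> b' i) \<bullet> (a' j \<times> b' j) = DD u i j k"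
      by (rule tri_dot) (use fr' R' ij k False goodD(1,2)[OF g] in \<open>auto simp: frames_def\<close>)
    have U: "u i j \<bullet> u i j = 1" "u j i \<bullet> u j i = 1" using goodD(1)[OF g] ij False by auto
    have r1: "rz a b u i j" "rz a' b' u i j" using R R' ij False by blast+
    show ?thesis
      using gram[OF F(1)[OF ij(1)] F(1)[OF ij(2)] U r1(1)[unfolded rz_def], of p q]
        gram[OF F(2)[OF ij(1)] F(2)[OF ij(2)] U r1(2)[unfolded rz_def], of p q]
        n1 n2 by simp
  qed
  define X where "X s = (if snd s then a (fst s) else b (fst s))" for s :: "nat \<times> bool"
  define Y where "Y s = (if snd s then a' (fst s) else b' (fst s))" for s :: "nat \<times> bool"
  have ea: "a i = embed (a i) (b i) (vector [1, 0])" "b i = embed (a i) (b i) (vector [0, 1])"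
    "a' i = embed (a' i) (b' i) (vector [1, 0])" "b' i = embed (a' i) (b' i) (vector [0, 1])" for i
    by (simp_all add: embed_def vector_2)
  have XY: "X s = embed (a (fst s)) (b (fst s)) (if snd s then vector [1, 0] else vector [0, 1])"
    "Y s = embed (a' (fst s)) (b' (fst s)) (if snd s then vector [1, 0] else vector [0, 1])" for s
    unfolding X_def Y_def using ea by auto
  have G: "\<forall>s\<in>Sigma {1..N} (\<lambda>_. UNIV). \<forall>t\<in>Sigma {1..N} (\<lambda>_. UNIV). X s \<bullet> X t = Y s \<bullet> Y t"
    unfolding XY using gr by auto
  have 1: "(1::nat, True) \<in> Sigma {1..N} (\<lambda>_. UNIV)" "(1::nat, False) \<in> Sigma {1..N} (\<lambda>_. UNIV)" using N by auto
  have fX: "is_frame (X (1, True)) (X (1, False))" unfolding X_def using F(1)[of 1] N by auto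
  obtain A where A: "orthogonal_matrix A" "\<forall>s\<in>Sigma {1..N} (\<lambda>_. UNIV). Y s = A *v X s"
    using gram_ortho[OF 1 fX G] by blast
  have "a' i = A *v a i \<and> b' i = A *v b i" if "i \<in> {1..N}" for i
  proof -
    have "(i, True) \<in> Sigma {1..N} (\<lambda>_. UNIV)" "(i, False) \<in> Sigma {1..N} (\<lambda>_. UNIV)" using that by auto
    then have "Y (i, True) = A *v X (i, True)" "Y (i, False) = A *v X (i, False)" using A(2) by blast+
    then show ?thesis unfolding X_def Y_def by simp
  qed
  then show ?thesis using A(1) by blast
qed




theorem theorem1:
  fixes N :: nat and v :: "nat \<Rightarrow> nat \<Rightarrow> real^2"
  assumes "N \<ge> 3"
    and "common_lines_data N v"
    and "\<forall>i\<in>{1..N}. \<forall>j\<in>{1..N}. \<forall>k\<in>{1..N}. distinct [i, j, k] \<longrightarrow> triple_strict v i j k"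
    and "\<forall>i\<in>{1..N}. \<forall>j\<in>{1..N}. \<forall>k\<in>{1..N}. \<forall>m\<in>{1..N}.
           distinct [i, j, k, m] \<longrightarrow> Lval v i j k m = 0"
  shows "(\<exists>a b. frames N a b \<and> generic N a b \<and> realizes N v a b) \<and>
         (\<forall>a b a' b'. frames N a b \<and> generic N a b \<and> realizes N v a b \<longrightarrow>
                      frames N a' b' \<and> generic N a' b' \<and> realizes N v a' b' \<longrightarrow>
            (\<exists>A :: real^3^3. orthogonal_matrix A \<and>
               (\<forall>i\<in>{1..N}. a' i = A *v a i \<and> b' i = A *v b i)))"
proof -
  define u where "u = unitv v"
  have nz: "v i j \<noteq> 0 \<and> norm (v i j) = norm (v j i)" if "i \<in> {1..N}" "j \<in> {1..N}" "i \<noteq> j" for i j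
  proof -
    have h: "(v i j, v j i) \<noteq> (0, 0)" "norm (v i j) ^ 2 = norm (v j i) ^ 2"
      using assms(2) that unfolding common_lines_data_def by blast+
    have ne: "norm (v i j) = norm (v j i)" using h(2) by (simp add: power2_eq_iff_nonneg)
    then have "v i j \<noteq> 0" using h(1) by auto
    then show ?thesis using ne by simp
  qed
  have unit: "u i j \<bullet> u i j = 1" if "i \<in> {1..N}" "j \<in> {1..N}" "i \<noteq> j" for i j
    using conjunct1[OF nz[OF that]] unfolding u_def unitv_def norm_eq_1[symmetric] by simp
  have vu: "v i j = norm (v i j) *\<^sub>R u i j" if "i \<in> {1..N}" "j \<in> {1..N}" "i \<noteq> j" for i j
    using conjunct1[OF nz[OF that]] unfolding u_def unitv_def by simp
  have req: "realizes N v a b \<longleftrightarrow> (\<forall>i\<in>{1..N}. \<forall>j\<in>{1..N}. i \<noteq> j \<longrightarrow> rz a b u i j)" for a b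
  proof -
    have "embed (a i) (b i) (v i j) = embed (a j) (b j) (v j i) \<longleftrightarrow> rz a b u i j"
      if "i \<in> {1..N}" "j \<in> {1..N}" "i \<noteq> j" for i j
    proof -
      have e: "embed (a i) (b i) (v i j) = norm (v i j) *\<^sub>R embed (a i) (b i) (u i j)"
        "embed (a j) (b j) (v j i) = norm (v i j) *\<^sub>R embed (a j) (b j) (u j i)"
        using vu[OF that] vu[of j i] that nz[OF that] embed_scale by (metis)+
      have "norm (v i j) \<noteq> 0" using conjunct1[OF nz[OF that]] by simp
      then show ?thesis unfolding e rz_def by simp
    qed
    then show ?thesis unfolding realizes_def by blast
  qed
  have tri: "ss u i j k \<noteq> 0 \<and> \<bar>DD u i j k\<bar> < 1"
    if idx: "i \<in> {1..N}" "j \<in> {1..N}" "k \<in> {1..N}" and d: "distinct [i, j, k]" for i j k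
  proof -
    have ts: "triple_strict v i j k" using assms(3) idx d by blast
    have ij: "i \<noteq> j" "i \<noteq> k" "j \<noteq> k" using d by auto
    have cnz: "1 / norm (v i j) \<noteq> 0" "1 / norm (v i k) \<noteq> 0" "1 / norm (v j k) \<noteq> 0"
      using nz idx ij by auto
    have sc: "(1 / norm (v i j)) *\<^sub>R v i j = u i j" "(1 / norm (v i j)) *\<^sub>R v j i = u j i"
      "(1 / norm (v i k)) *\<^sub>R v i k = u i k" "(1 / norm (v i k)) *\<^sub>R v k i = u k i"
      "(1 / norm (v j k)) *\<^sub>R v j k = u j k" "(1 / norm (v j k)) *\<^sub>R v k j = u k j"
      unfolding u_def unitv_def using nz idx ij by auto
    have st: "sph_tri_strict (ang (u i j) (u i k)) (ang (u j i) (u j k)) (ang (u k i) (u k j))"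
      using ts cnz unfolding triple_strict_def sc[symmetric] by blast
    have U: "u i j \<bullet> u i j = 1" "u i k \<bullet> u i k = 1" "u j i \<bullet> u j i = 1" "u j k \<bullet> u j k = 1"
      "u k i \<bullet> u k i = 1" "u k j \<bullet> u k j = 1" using unit idx ij by auto
    note A1 = ang_unit[OF U(1) U(2)] and A2 = ang_unit[OF U(3) U(4)] and A3 = ang_unit[OF U(5) U(6)]
    note T = tri_ineq[OF A1(3,4) A2(3,4) A3(3,4) st]
    have s1: "ss u i j k \<noteq> 0" using T(1) A1(2) unfolding ss_def by auto
    have s2: "ss u j i k \<noteq> 0" using T(2) A2(2) unfolding ss_def by auto
    have "\<bar>cc u k i j - cc u i j k * cc u j i k\<bar> < \<bar>ss u i j k\<bar> * \<bar>ss u j i k\<bar>"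
      using T(4) unfolding A1(1,2) A2(1,2) A3(1,2) cc_def ss_def .
    then have "\<bar>DD u i j k\<bar> < 1" unfolding DD_def using s1 s2
      by (simp add: abs_divide abs_mult divide_less_eq)
    then show ?thesis using s1 by simp
  qed
  have LL: "DD u i j k = DD u i j m"
    if idx: "i \<in> {1..N}" "j \<in> {1..N}" "k \<in> {1..N}" "m \<in> {1..N}" and d: "distinct [i, j, k, m]" for i j k m
  proof (rule L_D)
    show "Lval v i j k m = 0" using assms(4) idx d by blast
    show "u = unitv v" by (rule u_def)
    show "ss u i j k \<noteq> 0" "ss u j i k \<noteq> 0" "ss u i j m \<noteq> 0" "ss u j i m \<noteq> 0"
      using tri[of i j k] tri[of j i k] tri[of i j m] tri[of j i m] idx d by auto
  qed
  have g: "good N u" unfolding good_def using unit tri LL by blast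
  obtain a b where fr: "frames N a b" and R: "\<forall>i\<in>{1..N}. \<forall>j\<in>{1..N}. i \<noteq> j \<longrightarrow> rz a b u i j"
    using exist[OF g assms(1)] by blast
  have part1: "\<exists>a b. frames N a b \<and> generic N a b \<and> realizes N v a b"
    using fr R gen[OF g assms(1) fr R] req by blast
  have part2: "\<exists>A :: real^3^3. orthogonal_matrix A \<and> (\<forall>i\<in>{1..N}. a' i = A *v a i \<and> b' i = A *v b i)"
    if "frames N a b \<and> generic N a b \<and> realizes N v a b" "frames N a' b' \<and> generic N a' b' \<and> realizes N v a' b'"
    for a b a' b'
    using uniq[OF g assms(1), of a b a' b'] that req by blast
  show ?thesis using part1 part2 by blast
qed

end
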